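(* Let $n\ge3$ and $i\ge0$. If $x^\Lambda\partial_k\in\mathcal{L}_i$, then $r_i>\mathrm{WD}(x^\Lambda\partial_k)$. In particular, if $1\le k<n-r_i+1$, then $\mathcal{L}_i\cap\mathcal{B}_k=\emptyset$.
   Context: Fix an integer $n\ge 3$. A partition is a sequence $\Lambda=(\lambda_j)_{j\ge1}$ of non-negative integers with finite support; $\mathrm{wt}(\Lambda)=\sum_j j\lambda_j$; $\mathrm{Part}(k)$ is the set of partitions with $\lambda_j=0$ for $j>k$. Write $x^\Lambda=\prod_j x_j^{\lambda_j}$, $\deg(x^\Lambda)=\sum_j\lambda_j$. $\mathcal{B}=\{x^\Lambda\partial_k : 1\le k\le n,\ \Lambda\in\mathrm{Part}(k-1)\}$ and $\mathcal{B}_u=\{x^\Lambda\partial_k\in\mathcal{B}: k=u\}$. For an integer $i\ge-1$, let $r_i\in\{1,\dots,n-1\}$ with $i\equiv r_i\pmod{n-1}$ and $h_i=\lfloor (i-1)/(n-1)\rfloor+1$. Define $\mathrm{WD}(x^\Lambda\partial_k)=\mathrm{wt}(\Lambda)-\deg(x^\Lambda)+n-k$ and $\mathrm{lev}_i(x^\Lambda\partial_k)=h_i\,\mathrm{WD}(x^\Lambda\partial_k)+\deg(x^\Lambda)-1$. For $i\ge-1$, $\mathcal{N}_i=\{b\in\mathcal{B}: \mathrm{lev}_j(b)\le j\text{ for some integer } -1\le j\le i\}$, and $\mathcal{L}_i=\mathcal{N}_i\setminus\mathcal{N}_{i-1}$ for $i\ge0$. *)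

theory Defs
  imports Complex_Main
begin

(* A partition Lambda = (lambda_j)_{j>=1} is represented by a function nat => nat;
   index 0 is unused and required to be 0. *)
definition Part :: "nat \<Rightarrow> (nat \<Rightarrow> nat) set" where
  "Part k = {\<Lambda>. \<Lambda> 0 = 0 \<and> (\<forall>j>k. \<Lambda> j = 0)}"

definition wt :: "(nat \<Rightarrow> nat) \<Rightarrow> nat" where
  "wt \<Lambda> = (\<Sum>j\<in>{j. \<Lambda> j \<noteq> 0}. j * \<Lambda> j)"

definition deg :: "(nat \<Rightarrow> nat) \<Rightarrow> nat" where
  "deg \<Lambda> = (\<Sum>j\<in>{j. \<Lambda> j \<noteq> 0}. \<Lambda> j)"

(* basis element x^Lambda \<partial>_k represented as the pair (Lambda, k) *)
definition B :: "nat \<Rightarrow> ((nat \<Rightarrow> nat) \<times> nat) set" where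
  "B n = {(\<Lambda>, k). 1 \<le> k \<and> k \<le> n \<and> \<Lambda> \<in> Part (k - 1)}"

definition Bu :: "nat \<Rightarrow> nat \<Rightarrow> ((nat \<Rightarrow> nat) \<times> nat) set" where
  "Bu n u = {b \<in> B n. snd b = u}"

(* r_i in {1..n-1} with i = r_i mod (n-1) *)
definition r :: "nat \<Rightarrow> int \<Rightarrow> int" where
  "r n i = (i - 1) mod (int n - 1) + 1"

definition h :: "nat \<Rightarrow> int \<Rightarrow> int" where
  "h n i = \<lfloor>of_int (i - 1) / (of_int (int n - 1) :: real)\<rfloor> + 1"

definition WD :: "nat \<Rightarrow> (nat \<Rightarrow> nat) \<times> nat \<Rightarrow> int" where
  "WD n b = int (wt (fst b)) - int (deg (fst b)) + int n - int (snd b)"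

definition lev :: "nat \<Rightarrow> int \<Rightarrow> (nat \<Rightarrow> nat) \<times> nat \<Rightarrow> int" where
  "lev n i b = h n i * WD n b + int (deg (fst b)) - 1"

definition N :: "nat \<Rightarrow> int \<Rightarrow> ((nat \<Rightarrow> nat) \<times> nat) set" where
  "N n i = {b \<in> B n. \<exists>j::int. -1 \<le> j \<and> j \<le> i \<and> lev n j b \<le> j}"

definition L :: "nat \<Rightarrow> int \<Rightarrow> ((nat \<Rightarrow> nat) \<times> nat) set" where
  "L n i = N n i - N n (i - 1)"

end

theory Submission
  imports Defs
begin

lemma supp_sub:
  assumes "\<Lambda> \<in> Part k0"
  shows "{j. \<Lambda> j \<noteq> 0} \<subseteq> {..k0}"
  using assms unfolding Part_def by (metis (mono_tags, lifting) atMost_iff mem_Collect_eq not_le subsetI)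

lemma wt_ge_deg:
  assumes "\<Lambda> \<in> Part k0"
  shows "deg \<Lambda> \<le> wt \<Lambda>"
  unfolding deg_def wt_def
proof (rule sum_mono)
  fix j assume "j \<in> {j. \<Lambda> j \<noteq> 0}"
  moreover have "\<Lambda> 0 = 0" using assms by (simp add: Part_def)
  ultimately have "j \<ge> 1" by (cases j) auto
  then show "\<Lambda> j \<le> j * \<Lambda> j" by simp
qed

lemma wt_le:
  assumes "\<Lambda> \<in> Part k0"
  shows "wt \<Lambda> \<le> k0 * deg \<Lambda>"
proof -
  have fin: "finite {j. \<Lambda> j \<noteq> 0}" using supp_sub[OF assms] finite_subset by blast
  have "wt \<Lambda> \<le> (\<Sum>j\<in>{j. \<Lambda> j \<noteq> 0}. k0 * \<Lambda> j)"
    unfolding wt_def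
  proof (rule sum_mono)
    fix j assume "j \<in> {j. \<Lambda> j \<noteq> 0}"
    then have "j \<le> k0" using supp_sub[OF assms] by auto
    then show "j * \<Lambda> j \<le> k0 * \<Lambda> j" by simp
  qed
  also have "\<dots> = k0 * deg \<Lambda>" unfolding deg_def by (simp add: sum_distrib_left)
  finally show ?thesis .
qed

lemma hdiv: "int n - 1 > 0 \<Longrightarrow> h n i = (i - 1) div (int n - 1) + 1"
  unfolding h_def
  using floor_divide_of_int_eq[of "i - 1" "int n - 1"] by simp

lemma part1:
  assumes n3: "n \<ge> 3" and i0: "i \<ge> 0" and mem: "(\<Lambda>, k) \<in> L n i"
  shows "r n i > WD n (\<Lambda>, k)"
proof -
  define m where "m = int n - 1"
  have m2: "m \<ge> 2" using n3 unfolding m_def by simp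
  have inB: "(\<Lambda>, k) \<in> B n" and inN: "(\<Lambda>, k) \<in> N n i" and notN: "(\<Lambda>, k) \<notin> N n (i - 1)"
    using mem unfolding L_def N_def by auto
  have notlev: "\<And>j. -1 \<le> j \<Longrightarrow> j \<le> i - 1 \<Longrightarrow> \<not> lev n j (\<Lambda>, k) \<le> j"
    using notN inB unfolding N_def by auto
  obtain j where j: "-1 \<le> j" "j \<le> i" "lev n j (\<Lambda>, k) \<le> j" using inN unfolding N_def by auto
  have ji: "j = i" using notlev[of j] j by force
  have levi: "lev n i (\<Lambda>, k) \<le> i" using j ji by simp
  have k: "1 \<le> k" "k \<le> n" "\<Lambda> \<in> Part (k - 1)" using inB unfolding B_def by auto
  define W where "W = WD n (\<Lambda>, k)"
  define d where "d = int (deg \<Lambda>)"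
  have hm: "\<And>t. h n t = (t - 1) div m + 1" using hdiv m2 unfolding m_def by simp
  have levf: "\<And>t. lev n t (\<Lambda>, k) = h n t * W + d - 1" unfolding lev_def W_def d_def by simp
  show ?thesis
  proof (cases "i = 0")
    case True
    have dm1: "(-1) div m = -1" using m2 by (simp add: div_eq_minus1)
    have "(-2) div m = ((m - 2) + (-1) * m) div m" by simp
    also have "\<dots> = (m - 2) div m + (-1)" using m2 by (subst div_mult_self1) auto
    also have "(m - 2) div m = 0" using m2 by simp
    finally have dm2: "(-2) div m = -1" by simp
    have "h n (-1) = 0" using hm[of "-1"] dm2 by simp
    have h0': "h n 0 = 0" using hm[of 0] dm1 by simp
    have "d \<le> 1" using levi True levf h0' by simp
    moreover have "\<not> d \<le> 0" using notlev[of "-1"] True levf \<open>h n (-1) = 0\<close> by simp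
    ultimately have d1: "deg \<Lambda> = 1" unfolding d_def by simp
    have "wt \<Lambda> \<le> k - 1" using wt_le[OF k(3)] d1 by simp
    then have "W < m" unfolding W_def WD_def m_def using d1 k by simp
    moreover have "r n 0 = m"
    proof -
      have "(-1) mod m = -1 - m * ((-1) div m)" by (simp add: minus_div_mult_eq_mod[symmetric])
      then have "(-1) mod m = m - 1" using dm1 by simp
      then show ?thesis unfolding r_def m_def[symmetric] by simp
    qed
    ultimately show ?thesis using True W_def by simp
  next
    case False
    define q where "q = (i - 1) div m"
    define s where "s = (i - 1) mod m"
    have s: "0 \<le> s" "s < m" using m2 unfolding s_def by simp_all
    have q0: "q \<ge> 0" using False i0 m2 unfolding q_def by (intro pos_imp_zdiv_nonneg_iff[THEN iffD2]) auto
    have iq: "i = q * m + s + 1" unfolding q_def s_def by simp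
    have ri: "r n i = s + 1" unfolding r_def s_def m_def by simp
    have hi: "h n i = q + 1" using hm q_def by simp
    have "(q * m - 1) div m = q - 1"
    proof -
      have "q * m - 1 = (m - 1) + (q - 1) * m" by (simp add: algebra_simps)
      then have "(q * m - 1) div m = ((m - 1) + (q - 1) * m) div m" by (rule arg_cong)
      also have "\<dots> = (m - 1) div m + (q - 1)" using m2 by (subst div_mult_self1) auto
      also have "(m - 1) div m = 0" using m2 by simp
      finally show ?thesis by simp
    qed
    then have hj: "h n (q * m) = q" using hm by simp
    show ?thesis
    proof (rule ccontr)
      assume "\<not> ?thesis"
      then have Wge: "W \<ge> s + 1" using ri W_def by simp
      have "lev n i (\<Lambda>, k) = (q + 1) * W + d - 1" using levf hi by simp
      moreover have "lev n (q * m) (\<Lambda>, k) = q * W + d - 1" using levf hj by simp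
      ultimately have "lev n (q * m) (\<Lambda>, k) \<le> q * m"
        using levi iq Wge by (simp add: algebra_simps)
      moreover have "0 \<le> q * m" using q0 m2 by simp
      then have "-1 \<le> q * m" by simp
      moreover have "q * m \<le> i - 1" using iq s by simp
      ultimately show False using notlev by blast
    qed
  qed
qed

theorem proposition2p9:
  fixes n :: nat and i :: int
  assumes "n \<ge> 3" and "i \<ge> 0"
  shows "(\<forall>\<Lambda> k. (\<Lambda>, k) \<in> L n i \<longrightarrow> r n i > WD n (\<Lambda>, k))
       \<and> (\<forall>k::nat. 1 \<le> k \<and> int k < int n - r n i + 1 \<longrightarrow> L n i \<inter> Bu n k = {})"
proof (intro conjI allI impI)
  fix \<Lambda> k assume "(\<Lambda>, k) \<in> L n i"
  then show "r n i > WD n (\<Lambda>, k)" using part1 assms by blast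
next
  fix k :: nat assume k: "1 \<le> k \<and> int k < int n - r n i + 1"
  show "L n i \<inter> Bu n k = {}"
  proof (rule ccontr)
    assume "L n i \<inter> Bu n k \<noteq> {}"
    then obtain \<Lambda> k' where m: "(\<Lambda>, k') \<in> L n i" "(\<Lambda>, k') \<in> Bu n k" by auto
    then have kk: "k' = k" and P: "\<Lambda> \<in> Part (k - 1)" unfolding Bu_def B_def by auto
    have "deg \<Lambda> \<le> wt \<Lambda>" using wt_ge_deg[OF P] .
    then have "WD n (\<Lambda>, k) \<ge> int n - int k" unfolding WD_def by simp
    moreover have "r n i > WD n (\<Lambda>, k)" using part1 assms m kk by blast
    ultimately show False using k by simp
  qed
qed

end
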